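(* Let $N\geq2$, let $\eta$ be an $N$-core, let $t$ be a divisor of $N$, let $a\in\{0,\dots,t-1\}$ index a $t$-quotient and let $k\geq1$. Then there exists ${\bf G}\in\Lambda^*_N$ such that ${\bf G}(\lambda)={\bf p}_k(\lambda^{a/t})$ for every partition $\lambda$ with $\lambda^{\mathrm{mod}\,N}=\eta$.
   Context: $\zeta_N=e^{2\pi i/N}$. ${\bf p}_k(\lambda)=(1-2^{-k})\zeta(-k)+\sum_{i\ge1}[(\lambda_i-i+\frac12)^k-(-i+\frac12)^k]$. For $r\in\{0,\dots,N-1\}$: ${\bf p}_k^r(\lambda)=c_k^r+\sum_{i\geq1}\big[\zeta_N^{r(\lambda_i-i+1)}(\lambda_i-i+\frac12)^k-\zeta_N^{r(1-i)}(-i+\frac12)^k\big]$, where $c^0_k=(1-2^{-k})\zeta(-k)$ and for $r\ne0$, $\frac{1}{e^{z/2}-\zeta_N^{-r}e^{-z/2}}=\sum_kc_k^r\frac{z^k}{k!}$. $\Lambda_N^*=\mathbb{Q}(\zeta_N)[{\bf p}_k^r]_{k\ge1,0\le r\le N-1}$, viewed as functions on partitions. The $N$-core $\lambda^{\mathrm{mod}\,N}$ is what remains after removing $N$-rim hooks (connected boundary strips of $N$ boxes whose removal leaves a Young diagram) as long as possible. $t$-quotients: for $S=\{\lambda_j-j\}_{j\ge1}$ and each residue $a$ mod $t$, $\{(s-a)/t:s\in S,s\equiv a\bmod t\}$ is, up to an integer shift, $\{\rho_j-j\}_{j\ge1}$ for a unique partition $\rho=:\lambda^{a/t}$. *)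

theory Defs
  imports "HOL-Analysis.Analysis" "HOL-Computational_Algebra.Computational_Algebra"
begin

text \<open>A partition is a weakly decreasing list of positive naturals; part lam i is the
  i-th part (1-indexed), zero beyond the length.\<close>

definition is_partition :: "nat list \<Rightarrow> bool" where
  "is_partition lam \<longleftrightarrow> sorted_wrt (\<ge>) lam \<and> 0 \<notin> set lam"

definition part :: "nat list \<Rightarrow> nat \<Rightarrow> nat" where
  "part lam i = (if 1 \<le> i \<and> i \<le> length lam then lam ! (i - 1) else 0)"

text \<open>B_n via the generating function z/(e^z - 1) = sum B_n z^n/n!.\<close>
definition bernoulli_num :: "nat \<Rightarrow> real" where
  "bernoulli_num n = fact n * fps_nth (inverse (fps_shift 1 (fps_exp (1::real) - 1))) n"

definition zeta_neg :: "nat \<Rightarrow> real" where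
  "zeta_neg k = (-1) ^ k * bernoulli_num (k + 1) / real (k + 1)"

definition pk :: "nat \<Rightarrow> nat list \<Rightarrow> real" where
  "pk k lam = (1 - 1 / 2 ^ k) * zeta_neg k
     + (\<Sum>i = 1..length lam. (real (part lam i) - real i + 1/2) ^ k - (- real i + 1/2) ^ k)"

definition zN :: "nat \<Rightarrow> complex" where
  "zN N = cis (2 * pi / real N)"

definition ckr :: "nat \<Rightarrow> nat \<Rightarrow> nat \<Rightarrow> complex" where
  "ckr N r k = (if r = 0 then complex_of_real ((1 - 1 / 2 ^ k) * zeta_neg k)
     else fact k * fps_nth (inverse (fps_exp (1/2) - fps_const (zN N powi (- int r)) * fps_exp (-1/2))) k)"

definition pkr :: "nat \<Rightarrow> nat \<Rightarrow> nat \<Rightarrow> nat list \<Rightarrow> complex" where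
  "pkr N r k lam = ckr N r k
     + (\<Sum>i = 1..length lam.
          zN N powi (int r * (int (part lam i) - int i + 1)) * (complex_of_real (real (part lam i) - real i + 1/2)) ^ k
        - zN N powi (int r * (1 - int i)) * (complex_of_real (- real i + 1/2)) ^ k)"

definition Qzeta :: "nat \<Rightarrow> complex set" where
  "Qzeta N = {poly (map_poly of_rat p) (zN N) | p. True}"

inductive_set LambdaN :: "nat \<Rightarrow> (nat list \<Rightarrow> complex) set" for N :: nat where
  const: "c \<in> Qzeta N \<Longrightarrow> (\<lambda>_. c) \<in> LambdaN N"
| gen: "1 \<le> k \<Longrightarrow> r < N \<Longrightarrow> pkr N r k \<in> LambdaN N"
| add: "f \<in> LambdaN N \<Longrightarrow> g \<in> LambdaN N \<Longrightarrow> (\<lambda>x. f x + g x) \<in> LambdaN N"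
| mult: "f \<in> LambdaN N \<Longrightarrow> g \<in> LambdaN N \<Longrightarrow> (\<lambda>x. f x * g x) \<in> LambdaN N"

definition diag :: "nat list \<Rightarrow> (nat \<times> nat) set" where
  "diag lam = {(i, j). 1 \<le> i \<and> 1 \<le> j \<and> j \<le> part lam i}"

definition cell_adj :: "nat \<times> nat \<Rightarrow> nat \<times> nat \<Rightarrow> bool" where
  "cell_adj x y \<longleftrightarrow> (fst x = fst y \<and> (snd y = snd x + 1 \<or> snd x = snd y + 1))
                    \<or> (snd x = snd y \<and> (fst y = fst x + 1 \<or> fst x = fst y + 1))"

definition cells_connected :: "(nat \<times> nat) set \<Rightarrow> bool" where
  "cells_connected D \<longleftrightarrow>
     (\<forall>x\<in>D. \<forall>y\<in>D. (\<lambda>u v. u \<in> D \<and> v \<in> D \<and> cell_adj u v)\<^sup>*\<^sup>* x y)"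

text \<open>mu arises from lam by removing an N-rim hook: lam/mu is a connected set of N cells
  lying on the boundary (rim) of lam, and mu is again a partition.\<close>
definition rim_hook_removal :: "nat \<Rightarrow> nat list \<Rightarrow> nat list \<Rightarrow> bool" where
  "rim_hook_removal N lam mu \<longleftrightarrow> is_partition mu \<and> diag mu \<subseteq> diag lam \<and>
     (let D = diag lam - diag mu in
        card D = N \<and> cells_connected D \<and> (\<forall>(i, j)\<in>D. (i + 1, j + 1) \<notin> diag lam))"

definition is_core :: "nat \<Rightarrow> nat list \<Rightarrow> bool" where
  "is_core N eta \<longleftrightarrow> \<not> (\<exists>mu. rim_hook_removal N eta mu)"

definition core_of :: "nat \<Rightarrow> nat list \<Rightarrow> nat list \<Rightarrow> bool" where
  "core_of N lam eta \<longleftrightarrow> (rim_hook_removal N)\<^sup>*\<^sup>* lam eta \<and> is_core N eta"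

definition beta_set :: "nat list \<Rightarrow> int set" where
  "beta_set lam = {int (part lam j) - int j | j. 1 \<le> j}"

definition quot_set :: "nat \<Rightarrow> nat \<Rightarrow> nat list \<Rightarrow> int set" where
  "quot_set t a lam = {(s - int a) div int t | s. s \<in> beta_set lam \<and> s mod int t = int a}"

definition t_quotient :: "nat \<Rightarrow> nat \<Rightarrow> nat list \<Rightarrow> nat list" where
  "t_quotient t a lam = (THE rho. is_partition rho \<and>
      (\<exists>c::int. quot_set t a lam = (\<lambda>x. x + c) ` beta_set rho))"

end

theory Submission
  imports Defs
begin

lemma part_gt_len: "length lam < i \<Longrightarrow> part lam i = 0"
  by (simp add: part_def)

lemma part_Nil[simp]: "part [] i = 0"
  by (simp add: part_def)

lemma part_0[simp]: "part lam 0 = 0"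
  by (simp add: part_def)

lemma part_Cons1[simp]: "part (x # l) (Suc 0) = x"
  by (simp add: part_def)

lemma part_Cons_Suc: "1 \<le> j \<Longrightarrow> part (x # l) (Suc j) = part l j"
  by (simp add: part_def)

lemma is_partition_tl: "is_partition (x # l) \<Longrightarrow> is_partition l"
  by (simp add: is_partition_def)

lemma part_antitone:
  assumes "is_partition lam" "1 \<le> i" "i \<le> j"
  shows "part lam j \<le> part lam i"
proof (cases "j \<le> length lam")
  case False
  then show ?thesis by (simp add: part_def)
next
  case True
  have s: "sorted_wrt (\<ge>) lam" using assms(1) by (simp add: is_partition_def)
  show ?thesis
  proof (cases "i = j")
    case True then show ?thesis by simp
  next
    case False
    then have "i - 1 < j - 1" using assms by simp
    moreover have "j - 1 < length lam" using True assms by simp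
    ultimately have "lam ! (i - 1) \<ge> lam ! (j - 1)"
      using s by (simp add: sorted_wrt_iff_nth_less)
    then show ?thesis using True assms by (simp add: part_def)
  qed
qed

lemma beta_strict:
  assumes "is_partition lam" "1 \<le> i" "i < j"
  shows "int (part lam j) - int j < int (part lam i) - int i"
  using part_antitone[OF assms(1,2), of j] assms by simp

lemma beta_Nil: "beta_set [] = {u. u \<le> -1}"
proof -
  have "u \<in> beta_set []" if "u \<le> -1" for u
  proof -
    have "u = int (part [] (nat (-u))) - int (nat (-u)) \<and> 1 \<le> nat (-u)" using that by simp
    then show ?thesis unfolding beta_set_def by blast
  qed
  then show ?thesis unfolding beta_set_def by auto
qed

lemma beta_Cons: "beta_set (x # l) = insert (int x - 1) ((\<lambda>u. u - 1) ` beta_set l)"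
proof -
  have A: "int (part (x#l) j) - int j \<in> insert (int x - 1) ((\<lambda>u. u - 1) ` beta_set l)" if jj: "1 \<le> j" for j
  proof (cases "j = 1")
    case True then show ?thesis by simp
  next
    case False
    then obtain j' where j': "j = Suc j'" "1 \<le> j'" using jj by (cases j) auto
    have "int (part l j') - int j' \<in> beta_set l" using j' unfolding beta_set_def by blast
    then show ?thesis using j' by (force simp: part_Cons_Suc)
  qed
  have B: "int x - 1 \<in> beta_set (x # l)"
  proof -
    have "int x - 1 = int (part (x#l) 1) - int 1" by simp
    then show ?thesis unfolding beta_set_def by blast
  qed
  have C: "u - 1 \<in> beta_set (x # l)" if uu: "u \<in> beta_set l" for u
  proof -
    obtain j where j: "u = int (part l j) - int j" "1 \<le> j" using uu unfolding beta_set_def by blast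
    have "u - 1 = int (part (x#l) (Suc j)) - int (Suc j)" using j by (simp add: part_Cons_Suc)
    then show ?thesis unfolding beta_set_def by (metis (mono_tags, lifting) le_add1 mem_Collect_eq plus_1_eq_Suc)
  qed
  show ?thesis using A B C unfolding beta_set_def[of "x#l"] by blast
qed

lemma beta_le:
  assumes "is_partition l" "u \<in> beta_set l"
  shows "u \<le> int (part l 1) - 1"
proof -
  obtain j where j: "u = int (part l j) - int j" "1 \<le> j" using assms(2) unfolding beta_set_def by blast
  have "part l j \<le> part l 1" using part_antitone[OF assms(1), of 1 j] j by simp
  then show ?thesis using j by simp
qed

lemma beta_image:
  assumes "is_partition l" "length l \<le> n"
  shows "beta_set l \<inter> {- int n..} = (\<lambda>i. int (part l i) - int i) ` {1..n}"
proof -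
  have "u \<in> (\<lambda>i. int (part l i) - int i) ` {1..n}" if uu: "u \<in> beta_set l" "u \<ge> - int n" for u
  proof -
    obtain j where j: "u = int (part l j) - int j" "1 \<le> j" using uu(1) unfolding beta_set_def by blast
    have "j \<le> n"
    proof (rule ccontr)
      assume "\<not> j \<le> n"
      then have "part l j = 0" using assms(2) by (simp add: part_def)
      then show False using j uu(2) \<open>\<not> j \<le> n\<close> by simp
    qed
    then show ?thesis using j by auto
  qed
  moreover have "int (part l i) - int i \<in> beta_set l \<inter> {- int n..}" if "i \<in> {1..n}" for i
    using that unfolding beta_set_def by auto
  ultimately show ?thesis by blast
qed

lemma beta_inj:
  assumes "is_partition l"
  shows "inj_on (\<lambda>i. int (part l i) - int i) {1..n}"
proof (rule inj_onI)
  fix i j assume ij: "i \<in> {1..n}" "j \<in> {1..n}" "int (part l i) - int i = int (part l j) - int j"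
  show "i = j"
  proof (rule ccontr)
    assume "i \<noteq> j"
    then have "i < j \<or> j < i" by auto
    then show False using beta_strict[OF assms] ij by fastforce
  qed
qed

definition Ssum :: "(int \<Rightarrow> 'a::comm_monoid_add) \<Rightarrow> nat list \<Rightarrow> nat \<Rightarrow> 'a" where
  "Ssum F lam n = (\<Sum>i = 1..n. F (int (part lam i) - int i))"

lemma beta_sum:
  assumes "is_partition l" "length l \<le> n"
  shows "(\<Sum>u \<in> beta_set l \<inter> {- int n..}. F u) = Ssum F l n"
  unfolding beta_image[OF assms] Ssum_def
  by (subst sum.reindex[OF beta_inj[OF assms(1)]]) simp

lemma beta_finite:
  assumes "is_partition l" "length l \<le> n"
  shows "finite (beta_set l \<inter> {- int n..})"
  unfolding beta_image[OF assms] by simp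

lemma beta_card:
  assumes "is_partition l" "length l \<le> n"
  shows "card (beta_set l \<inter> {- int n..}) = n"
  unfolding beta_image[OF assms] by (subst card_image[OF beta_inj[OF assms(1)]]) simp

lemma part_le_head: "is_partition (x # l) \<Longrightarrow> part l 1 \<le> x"
  by (cases l) (auto simp: is_partition_def part_def)

lemma exists_partition:
  "\<forall>Y. (\<forall>y. y \<le> - int m - 1 \<longrightarrow> y \<in> Y) \<longrightarrow> finite (Y \<inter> {- int m..}) \<longrightarrow>
       card (Y \<inter> {- int m..}) = m \<longrightarrow> (\<exists>\<rho>. is_partition \<rho> \<and> beta_set \<rho> = Y)"
proof (induction m)
  case 0
  show ?case
  proof (intro allI impI)
    fix Y :: "int set"
    assume h: "\<forall>y. y \<le> - int 0 - 1 \<longrightarrow> y \<in> Y" "finite (Y \<inter> {- int 0..})" "card (Y \<inter> {- int 0..}) = 0"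
    then have "Y \<inter> {0..} = {}" by simp
    then have "Y = {u. u \<le> -1}" using h(1) by force
    then show "\<exists>\<rho>. is_partition \<rho> \<and> beta_set \<rho> = Y"
      by (intro exI[of _ "[]"]) (simp add: is_partition_def beta_Nil)
  qed
next
  case (Suc m)
  show ?case
  proof (intro allI impI)
    fix Y :: "int set"
    assume h: "\<forall>y. y \<le> - int (Suc m) - 1 \<longrightarrow> y \<in> Y" "finite (Y \<inter> {- int (Suc m)..})"
      "card (Y \<inter> {- int (Suc m)..}) = Suc m"
    define Z where "Z = Y \<inter> {- int (Suc m)..}"
    have Zf: "finite Z" and Zc: "card Z = Suc m" using h Z_def by auto
    then have Zne: "Z \<noteq> {}" by auto
    define ym where "ym = Max Z"
    have ymZ: "ym \<in> Z" using Zf Zne ym_def by simp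
    have ymax: "\<And>y. y \<in> Z \<Longrightarrow> y \<le> ym" using Zf ym_def by simp
    show "\<exists>\<rho>. is_partition \<rho> \<and> beta_set \<rho> = Y"
    proof (cases "ym \<le> -1")
      case True
      have sub: "Z \<subseteq> {- int (Suc m)..-1}"
      proof
        fix y assume yZ: "y \<in> Z"
        then show "y \<in> {- int (Suc m)..-1}" using ymax[OF yZ] True Z_def by auto
      qed
      have "card {- int (Suc m)..-1} = Suc m" by simp
      then have Zeq: "Z = {- int (Suc m)..-1}" using card_subset_eq[OF _ sub] Zc by simp
      have "Y = {u. u \<le> -1}"
      proof (intro set_eqI iffI)
        fix y assume "y \<in> Y"
        show "y \<in> {u. u \<le> -1}"
        proof (cases "y \<ge> - int (Suc m)")
          case True then have "y \<in> Z" using \<open>y \<in> Y\<close> Z_def by simp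
          then show ?thesis using Zeq by simp
        next
          case False then show ?thesis by simp
        qed
      next
        fix y :: int assume "y \<in> {u. u \<le> -1}"
        then show "y \<in> Y"
        proof (cases "y \<ge> - int (Suc m)")
          case True then have "y \<in> Z" using \<open>y \<in> {u. u \<le> -1}\<close> Zeq by simp
          then show ?thesis using Z_def by simp
        next
          case False then show ?thesis using h(1) by simp
        qed
      qed
      then show ?thesis
        by (intro exI[of _ "[]"]) (simp add: is_partition_def beta_Nil)
    next
      case False
      define Y' where "Y' = (\<lambda>y. y + 1) ` (Y - {ym})"
      have c1: "\<forall>y. y \<le> - int m - 1 \<longrightarrow> y \<in> Y'"
      proof (intro allI impI)
        fix y assume "y \<le> - int m - 1"
        then have "y - 1 \<in> Y" "y - 1 \<noteq> ym" using h(1) False by auto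
        then show "y \<in> Y'" unfolding Y'_def by (intro image_eqI[of _ _ "y - 1"]) auto
      qed
      have eqY: "Y' \<inter> {- int m..} = (\<lambda>y. y + 1) ` (Z - {ym})"
        unfolding Y'_def Z_def by force
      have c2: "finite (Y' \<inter> {- int m..})" unfolding eqY using Zf by simp
      have c3: "card (Y' \<inter> {- int m..}) = m" unfolding eqY
        using Zf Zc ymZ by (subst card_image) (auto simp: inj_on_def)
      obtain \<rho>' where r': "is_partition \<rho>'" "beta_set \<rho>' = Y'"
        using Suc.IH c1 c2 c3 by blast
      define x where "x = nat (ym + 1)"
      have xpos: "x > 0" using False x_def by simp
      have hd: "part \<rho>' 1 \<le> x"
      proof (cases "part \<rho>' 1 = 0")
        case True then show ?thesis by simp
      next
        case False
        have "int (part \<rho>' 1) - 1 \<in> Y'"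
        proof -
          have "int (part \<rho>' 1) - int 1 \<in> beta_set \<rho>'" unfolding beta_set_def by blast
          then show ?thesis using r' by simp
        qed
        then obtain y where y0: "y \<in> Y - {ym}" "int (part \<rho>' 1) - 1 = y + 1" unfolding Y'_def by blast
        then have y: "y \<in> Y" "y \<noteq> ym" "int (part \<rho>' 1) - 1 = y + 1" by auto
        then have "y \<in> Z" using False Z_def by auto
        then have "y < ym" using ymax y by force
        then show ?thesis using y x_def by simp
      qed
      have allle: "\<forall>z\<in>set \<rho>'. z \<le> x"
      proof
        fix z assume "z \<in> set \<rho>'"
        then obtain i where i: "i < length \<rho>'" "\<rho>' ! i = z" by (auto simp: in_set_conv_nth)
        have "part \<rho>' (Suc i) = z" using i by (simp add: part_def)
        moreover have "part \<rho>' (Suc i) \<le> part \<rho>' 1" using part_antitone[OF r'(1), of 1 "Suc i"] by simp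
        ultimately show "z \<le> x" using hd by simp
      qed
      have part: "is_partition (x # \<rho>')"
        using r'(1) allle xpos by (auto simp: is_partition_def)
      have "beta_set (x # \<rho>') = Y"
      proof -
        have "beta_set (x # \<rho>') = insert ym ((\<lambda>u. u - 1) ` Y')"
          using beta_Cons[of x \<rho>'] r' x_def False by simp
        also have "(\<lambda>u. u - 1) ` Y' = Y - {ym}" unfolding Y'_def by (simp add: image_image)
        finally show ?thesis using ymZ Z_def by auto
      qed
      then show ?thesis using part by blast
    qed
  qed
qed

lemma beta_eq_imp_eq:
  "is_partition r1 \<Longrightarrow> is_partition r2 \<Longrightarrow> beta_set r1 = beta_set r2 \<Longrightarrow> r1 = r2"
proof (induction r1 arbitrary: r2)
  case Nil
  show ?case
  proof (cases r2)
    case Nil then show ?thesis by simp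
  next
    case (Cons y l)
    have "y > 0" using Nil.prems(2) Cons by (auto simp: is_partition_def)
    moreover have "int y - 1 \<in> beta_set r2" using Cons by (simp add: beta_Cons)
    then have "int y - 1 \<in> beta_set []" using Nil.prems(3) by simp
    ultimately show ?thesis by (simp add: beta_Nil)
  qed
next
  case (Cons x l1)
  show ?case
  proof (cases r2)
    case Nil
    have "x > 0" using Cons.prems(1) by (auto simp: is_partition_def)
    moreover have "int x - 1 \<in> beta_set (x # l1)" by (simp add: beta_Cons)
    then have "int x - 1 \<in> beta_set []" using Cons.prems(3) Nil by simp
    ultimately show ?thesis by (simp add: beta_Nil)
  next
    fix y l2 assume Cons2: "r2 = y # l2"
    have "int x - 1 \<in> beta_set (x # l1)" by (simp add: beta_Cons)
    then have "int x - 1 \<in> beta_set r2" using Cons.prems(3) by simp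
    then have "int x - 1 \<le> int y - 1" using beta_le[OF Cons.prems(2), of "int x - 1"] Cons2 by simp
    moreover have "int y - 1 \<in> beta_set r2" using Cons2 by (simp add: beta_Cons)
    then have "int y - 1 \<in> beta_set (x # l1)" using Cons.prems(3) by simp
    then have "int y - 1 \<le> int x - 1" using beta_le[OF Cons.prems(1), of "int y - 1"] by simp
    ultimately have xy: "x = y" by simp
    have p1: "is_partition l1" and p2: "is_partition l2"
      using Cons.prems(1,2) Cons2 by (auto simp: is_partition_def)
    have h1: "part l1 1 \<le> x" using part_le_head[OF Cons.prems(1)] .
    have h2: "part l2 1 \<le> x" using part_le_head[of y l2] Cons.prems(2) Cons2 xy by simp
    have n1: "int x - 1 \<notin> (\<lambda>u. u - 1) ` beta_set l1"
    proof
      assume "int x - 1 \<in> (\<lambda>u. u - 1) ` beta_set l1"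
      then obtain u where "u \<in> beta_set l1" "int x - 1 = u - 1" by blast
      then show False using beta_le[OF p1, of u] h1 by simp
    qed
    have n2: "int x - 1 \<notin> (\<lambda>u. u - 1) ` beta_set l2"
    proof
      assume "int x - 1 \<in> (\<lambda>u. u - 1) ` beta_set l2"
      then obtain u where "u \<in> beta_set l2" "int x - 1 = u - 1" by blast
      then show False using beta_le[OF p2, of u] h2 by simp
    qed
    have "insert (int x - 1) ((\<lambda>u. u - 1) ` beta_set l1) = insert (int x - 1) ((\<lambda>u. u - 1) ` beta_set l2)"
      using Cons.prems(3) Cons2 xy by (simp add: beta_Cons)
    then have "(\<lambda>u. u - 1) ` beta_set l1 = (\<lambda>u. u - 1) ` beta_set l2" using insert_ident[OF n1 n2] by simp
    moreover have "inj (\<lambda>u::int. u - 1)" by (simp add: inj_on_def)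
    ultimately have "beta_set l1 = beta_set l2" by (simp add: inj_image_eq_iff)
    then have "l1 = l2" using Cons.IH p1 p2 by blast
    then show ?thesis using xy Cons2 by simp
  qed
qed

lemma shift_inter: "(\<lambda>x. x + (c::int)) ` B \<inter> {X..} = (\<lambda>x. x + c) ` (B \<inter> {X - c..})"
proof (intro set_eqI iffI)
  fix v assume "v \<in> (\<lambda>x. x + c) ` B \<inter> {X..}"
  then obtain u where u: "u \<in> B" "v = u + c" "v \<ge> X" by auto
  then have "u \<in> B \<inter> {X - c..}" by auto
  then show "v \<in> (\<lambda>x. x + c) ` (B \<inter> {X - c..})" using u(2) by blast
next
  fix v assume "v \<in> (\<lambda>x. x + c) ` (B \<inter> {X - c..})"
  then obtain u where "u \<in> B" "v = u + c" "u \<ge> X - c" by auto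
  then show "v \<in> (\<lambda>x. x + c) ` B \<inter> {X..}" by auto
qed

lemma shift_card:
  assumes "is_partition r" "c - X \<ge> int (length r)"
  shows "card ((\<lambda>x. x + c) ` beta_set r \<inter> {X..}) = nat (c - X)"
proof -
  have "card ((\<lambda>x. x + c) ` beta_set r \<inter> {X..}) = card (beta_set r \<inter> {X - c..})"
    unfolding shift_inter by (rule card_image) (simp add: inj_on_def)
  also have "X - c = - int (nat (c - X))" using assms(2) by simp
  also have "card (beta_set r \<inter> {- int (nat (c - X))..}) = nat (c - X)"
    using beta_card[OF assms(1), of "nat (c - X)"] assms(2) by simp
  finally show ?thesis .
qed

lemma shift_unique:
  assumes "is_partition r1" "is_partition r2"
    "(\<lambda>x. x + c1) ` beta_set r1 = (\<lambda>x. x + c2) ` beta_set r2"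
  shows "r1 = r2 \<and> c1 = c2"
proof -
  define X where "X = - int (length r1) - int (length r2) - \<bar>c1\<bar> - \<bar>c2\<bar>"
  have X1: "c1 - X \<ge> int (length r1)" "c2 - X \<ge> int (length r2)" unfolding X_def by auto
  have e1: "card ((\<lambda>x. x + c1) ` beta_set r1 \<inter> {X..}) = nat (c1 - X)" by (rule shift_card[OF assms(1) X1(1)])
  have e2: "card ((\<lambda>x. x + c2) ` beta_set r2 \<inter> {X..}) = nat (c2 - X)" by (rule shift_card[OF assms(2) X1(2)])
  from e1 have "card ((\<lambda>x. x + c2) ` beta_set r2 \<inter> {X..}) = nat (c1 - X)" by (simp only: assms(3))
  with e2 have "nat (c1 - X) = nat (c2 - X)" by simp
  then have c: "c1 = c2" using X1 eq_nat_nat_iff[of "c1 - X" "c2 - X"] by simp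
  then have "beta_set r1 = beta_set r2" using assms(3) by (simp add: inj_image_eq_iff inj_on_def)
  then show ?thesis using beta_eq_imp_eq assms c by blast
qed

lemma tq_eq:
  assumes "is_partition \<rho>" "quot_set t a lam = (\<lambda>x. x + c) ` beta_set \<rho>"
  shows "t_quotient t a lam = \<rho>"
  unfolding t_quotient_def
proof (rule the_equality)
  show "is_partition \<rho> \<and> (\<exists>c. quot_set t a lam = (\<lambda>x. x + c) ` beta_set \<rho>)" using assms by blast
next
  fix r assume "is_partition r \<and> (\<exists>c. quot_set t a lam = (\<lambda>x. x + c) ` beta_set r)"
  then obtain c' where c': "is_partition r" "quot_set t a lam = (\<lambda>x. x + c') ` beta_set r" by blast
  show "r = \<rho>" using shift_unique[OF c'(1) assms(1) trans[OF c'(2)[symmetric] assms(2)]] by (rule conjunct1)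
qed

lemma mod_eq_decomp:
  fixes s :: int assumes "t > 0" "s mod t = a"
  shows "s = t * ((s - a) div t) + a"
proof -
  have "(s - a) mod t = 0" using assms by (simp add: mod_diff_left_eq[symmetric])
  then have "s - a = t * ((s - a) div t)" using div_mult_mod_eq[of "s - a" t] by (simp add: mult.commute)
  then show ?thesis by linarith
qed

lemma quot_image:
  assumes "t > 0" "M' = - (int t * X + int a)"
  shows "quot_set t a lam \<inter> {X..} =
    (\<lambda>s. (s - int a) div int t) ` {s \<in> beta_set lam \<inter> {- M'..}. s mod int t = int a}"
proof (intro set_eqI iffI)
  fix v assume "v \<in> quot_set t a lam \<inter> {X..}"
  then obtain s where s: "v = (s - int a) div int t" "s \<in> beta_set lam" "s mod int t = int a" "v \<ge> X"
    unfolding quot_set_def by blast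
  have "s = int t * v + int a" using mod_eq_decomp[of "int t" s "int a"] s assms by simp
  then have "s \<ge> - M'" using s(4) assms by (simp add: mult_left_mono)
  then show "v \<in> (\<lambda>s. (s - int a) div int t) ` {s \<in> beta_set lam \<inter> {- M'..}. s mod int t = int a}"
    using s by blast
next
  fix v assume "v \<in> (\<lambda>s. (s - int a) div int t) ` {s \<in> beta_set lam \<inter> {- M'..}. s mod int t = int a}"
  then obtain s where s: "v = (s - int a) div int t" "s \<in> beta_set lam" "s mod int t = int a" "s \<ge> - M'"
    by blast
  have e: "s = int t * v + int a" using mod_eq_decomp[of "int t" s "int a"] s assms by simp
  then have "int t * v \<ge> int t * X" using s(4) assms by simp
  then have "v \<ge> X" using assms(1) by (simp add: mult_le_cancel_left)
  then show "v \<in> quot_set t a lam \<inter> {X..}" unfolding quot_set_def using s by blast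
qed

lemma quot_inj:
  assumes "t > 0"
  shows "inj_on (\<lambda>s. (s - int a) div int t) {s \<in> A. s mod int t = int a}"
proof (rule inj_onI)
  fix s1 s2 assume h: "s1 \<in> {s \<in> A. s mod int t = int a}" "s2 \<in> {s \<in> A. s mod int t = int a}"
    "(s1 - int a) div int t = (s2 - int a) div int t"
  then show "s1 = s2" using mod_eq_decomp[of "int t" s1 "int a"] mod_eq_decomp[of "int t" s2 "int a"] assms
    by auto
qed

lemma quot_sum:
  assumes "t > 0" "is_partition lam" "M' = - (int t * X + int a)" "M' \<ge> int (length lam)"
  shows "(\<Sum>v \<in> quot_set t a lam \<inter> {X..}. F v) =
     Ssum (\<lambda>s. if s mod int t = int a then F ((s - int a) div int t) else 0) lam (nat M')"
    and "finite (quot_set t a lam \<inter> {X..})"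
proof -
  have fin: "finite (beta_set lam \<inter> {- M'..})"
    using beta_finite[OF assms(2), of "nat M'"] assms(4) by simp
  show "(\<Sum>v \<in> quot_set t a lam \<inter> {X..}. F v) =
     Ssum (\<lambda>s. if s mod int t = int a then F ((s - int a) div int t) else 0) lam (nat M')"
  proof -
    have "(\<Sum>v \<in> quot_set t a lam \<inter> {X..}. F v) =
      (\<Sum>s \<in> {s \<in> beta_set lam \<inter> {- M'..}. s mod int t = int a}. F ((s - int a) div int t))"
      unfolding quot_image[OF assms(1,3)] by (rule sum.reindex_cong[OF quot_inj[OF assms(1)]]) auto
    also have "\<dots> = (\<Sum>s \<in> beta_set lam \<inter> {- M'..}. if s mod int t = int a then F ((s - int a) div int t) else 0)"
      by (rule sum.inter_filter[OF fin])
    also have "\<dots> = Ssum (\<lambda>s. if s mod int t = int a then F ((s - int a) div int t) else 0) lam (nat M')"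
    proof -
      have e: "int (nat M') = M'" using assms(4) by simp
      have l: "length lam \<le> nat M'" using assms(4) by simp
      show ?thesis using beta_sum[OF assms(2) l] e by simp
    qed
    finally show ?thesis .
  qed
  show "finite (quot_set t a lam \<inter> {X..})"
    unfolding quot_image[OF assms(1,3)] using fin by (intro finite_imageI) (rule finite_subset[rotated], auto)
qed

lemma quot_exists:
  assumes "t > 0" "a < t" "is_partition lam"
  shows "\<exists>\<rho> c. is_partition \<rho> \<and> quot_set t a lam = (\<lambda>x. x + c) ` beta_set \<rho>"
proof -
  define T where "T = int (length lam) + 1"
  define M' where "M' = - (int t * (- T) + int a)"
  have M'ge: "M' \<ge> int (length lam)"
  proof -
    have "t * length lam \<ge> length lam" using assms(1) by simp
    then have h1: "int t * int (length lam) \<ge> int (length lam)" by (metis of_nat_le_iff of_nat_mult)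
    have "M' = int t * int (length lam) + int t - int a" unfolding M'_def T_def by (simp add: algebra_simps)
    then show ?thesis using h1 assms(2) by linarith
  qed
  define Qs where "Qs = quot_set t a lam"
  have finQ: "finite (Qs \<inter> {- T..})" unfolding Qs_def
    using quot_sum(2)[OF assms(1,3) M'_def M'ge] .
  define K where "K = card (Qs \<inter> {- T..})"
  have below: "v \<in> Qs" if "v \<le> - T - 1" for v
  proof -
    define s where "s = int t * v + int a"
    have "int t * v \<le> int t * (- T - 1)" using that assms(1) by (simp add: mult_left_mono)
    then have sle: "s \<le> - M' - 1" unfolding s_def M'_def using assms(2) by (simp add: algebra_simps)
    then have "s \<le> - int (length lam) - 1" using M'ge by simp
    then have "s \<in> beta_set lam"
    proof -
      assume h: "s \<le> - int (length lam) - 1"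
      have "nat (- s) > length lam" using h by simp
      then have "part lam (nat (- s)) = 0" by (simp add: part_def)
      then have "s = int (part lam (nat (- s))) - int (nat (- s)) \<and> 1 \<le> nat (- s)" using h by simp
      then show ?thesis unfolding beta_set_def by blast
    qed
    moreover have "s mod int t = int a" unfolding s_def using assms by simp
    moreover have "(s - int a) div int t = v" unfolding s_def using assms by simp
    ultimately show ?thesis unfolding Qs_def quot_set_def by blast
  qed
  define d where "d = int K - T"
  define Y where "Y = (\<lambda>v. v - d) ` Qs"
  have c1: "\<forall>y. y \<le> - int K - 1 \<longrightarrow> y \<in> Y"
  proof (intro allI impI)
    fix y assume "y \<le> - int K - 1"
    then have "y + d \<in> Qs" using below d_def by simp
    then show "y \<in> Y" unfolding Y_def by (intro image_eqI[of _ _ "y + d"]) auto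
  qed
  have eqY: "Y \<inter> {- int K..} = (\<lambda>v. v - d) ` (Qs \<inter> {- T..})"
  proof (intro set_eqI iffI)
    fix y assume "y \<in> Y \<inter> {- int K..}"
    then obtain v where "v \<in> Qs" "y = v - d" "y \<ge> - int K" unfolding Y_def by auto
    then show "y \<in> (\<lambda>v. v - d) ` (Qs \<inter> {- T..})" using d_def by auto
  next
    fix y assume "y \<in> (\<lambda>v. v - d) ` (Qs \<inter> {- T..})"
    then obtain v where "v \<in> Qs" "y = v - d" "v \<ge> - T" by auto
    then show "y \<in> Y \<inter> {- int K..}" unfolding Y_def using d_def by auto
  qed
  have c2: "finite (Y \<inter> {- int K..})" unfolding eqY using finQ by simp
  have c3: "card (Y \<inter> {- int K..}) = K"
  proof -
    have "card (Y \<inter> {- int K..}) = card (Qs \<inter> {- T..})" unfolding eqY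
      by (rule card_image) (simp add: inj_on_def)
    then show ?thesis using K_def by simp
  qed
  obtain \<rho> where r: "is_partition \<rho>" "beta_set \<rho> = Y" using exists_partition[of K] c1 c2 c3 by blast
  have "quot_set t a lam = (\<lambda>x. x + d) ` beta_set \<rho>"
    unfolding r(2) Y_def Qs_def by (simp add: image_image)
  then show ?thesis using r(1) by blast
qed

definition Rg :: "(int \<Rightarrow> 'a::ab_group_add) \<Rightarrow> nat list \<Rightarrow> nat \<Rightarrow> 'a" where
  "Rg F lam n = Ssum F lam n - Ssum F [] n"

lemma Rg_stable:
  assumes "length lam \<le> n"
  shows "Rg F lam n = Rg F lam (length lam)"
  using assms
proof (induction n rule: dec_induct)
  case base then show ?case by simp
next
  case (step n)
  have "part lam (Suc n) = 0" using step.hyps by (simp add: part_def)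
  then have "Rg F lam (Suc n) = Rg F lam n"
    unfolding Rg_def Ssum_def by simp
  then show ?case using step.IH by simp
qed

lemma Rg_add: "Rg (\<lambda>s. F s + G s) lam n = Rg F lam n + Rg G lam n"
  unfolding Rg_def Ssum_def by (simp add: sum.distrib algebra_simps)

lemma Rg_sum: "finite I \<Longrightarrow> Rg (\<lambda>s. \<Sum>x\<in>I. F x s) lam n = (\<Sum>x\<in>I. Rg (F x) lam n)"
  by (induction I rule: finite_induct) (auto simp: Rg_add, simp add: Rg_def Ssum_def)

lemma Rg_cmult: "Rg (\<lambda>s. (c::'a::comm_ring) * F s) lam n = c * Rg F lam n"
  unfolding Rg_def Ssum_def by (simp add: sum_distrib_left algebra_simps)

lemma diag_Sigma: "diag lam = Sigma {1..length lam} (\<lambda>i. {1..part lam i})"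
  unfolding diag_def by (auto simp: part_def split: if_splits)

lemma finite_diag: "finite (diag lam)"
  unfolding diag_Sigma by simp

lemma tele_row:
  "(\<Sum>j = 1..p. (\<phi> (int j - c) - \<phi> (int j - c - 1) :: 'a::ab_group_add)) = \<phi> (int p - c) - \<phi> (- c)"
proof (induction p)
  case 0 then show ?case by simp
next
  case (Suc p)
  then show ?case by (simp add: algebra_simps)
qed

lemma cell_formula:
  "Rg \<phi> lam (length lam) = (\<Sum>(i, j)\<in>diag lam. (\<phi> (int j - int i) - \<phi> (int j - int i - 1) :: 'a::ab_group_add))"
proof -
  have "(\<Sum>(i, j)\<in>diag lam. \<phi> (int j - int i) - \<phi> (int j - int i - 1))
      = (\<Sum>i = 1..length lam. \<Sum>j = 1..part lam i. \<phi> (int j - int i) - \<phi> (int j - int i - 1))"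
    unfolding diag_Sigma by (subst sum.Sigma) auto
  also have "\<dots> = (\<Sum>i = 1..length lam. \<phi> (int (part lam i) - int i) - \<phi> (- int i))"
    using tele_row[of \<phi>] by simp
  also have "\<dots> = Rg \<phi> lam (length lam)"
    unfolding Rg_def Ssum_def by (simp add: sum_subtractf)
  finally show ?thesis by simp
qed

definition ct :: "nat \<times> nat \<Rightarrow> int" where "ct p = int (snd p) - int (fst p)"

lemma adj_ct: "cell_adj u v \<Longrightarrow> ct v = ct u + 1 \<or> ct v = ct u - 1"
  unfolding cell_adj_def ct_def by auto

lemma connected_convex:
  assumes "(\<lambda>u v. u \<in> D \<and> v \<in> D \<and> cell_adj u v)\<^sup>*\<^sup>* x y" "x \<in> D"
  shows "y \<in> D \<and> (\<forall>z. min (ct x) (ct y) \<le> z \<and> z \<le> max (ct x) (ct y) \<longrightarrow> z \<in> ct ` D)"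
  using assms(1)
proof (induction rule: rtranclp_induct)
  case base
  then show ?case using assms(2) by auto
next
  case (step y w)
  have wD: "w \<in> D" using step.hyps(2) by simp
  have a: "ct w = ct y + 1 \<or> ct w = ct y - 1" using adj_ct step.hyps(2) by blast
  show ?case
  proof (intro conjI allI impI)
    show "w \<in> D" by (rule wD)
  next
    fix z assume z: "min (ct x) (ct w) \<le> z \<and> z \<le> max (ct x) (ct w)"
    show "z \<in> ct ` D"
    proof (cases "z = ct w")
      case True then show ?thesis using wD by blast
    next
      case False
      then have "min (ct x) (ct y) \<le> z \<and> z \<le> max (ct x) (ct y)" using z a by linarith
      then show ?thesis using step.IH by blast
    qed
  qed
qed

lemma rim_contents:
  assumes "is_partition lam" "rim_hook_removal N lam mu" "N \<ge> 1"
  shows "\<exists>m. ct ` (diag lam - diag mu) = {m..m + int N - 1} \<and> inj_on ct (diag lam - diag mu)"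
proof -
  define D where "D = diag lam - diag mu"
  have cD: "card D = N" and conn: "cells_connected D" and rim: "\<forall>(i, j)\<in>D. (i + 1, j + 1) \<notin> diag lam"
    using assms(2) unfolding rim_hook_removal_def D_def Let_def by auto
  have finD: "finite D" unfolding D_def using finite_diag by simp
  have Dsub: "D \<subseteq> diag lam" unfolding D_def by auto
  have inj: "inj_on ct D"
  proof (rule inj_onI)
    fix p q assume pq: "p \<in> D" "q \<in> D" "ct p = ct q"
    show "p = q"
    proof (rule ccontr)
      assume ne: "p \<noteq> q"
      have key: False if h: "p' \<in> D" "q' \<in> D" "ct p' = ct q'" "fst p' < fst q'" for p' q'
      proof -
        obtain i j where p': "p' = (i, j)" by (cases p')
        obtain i' j' where q': "q' = (i', j')" by (cases q')
        have i: "i < i'" using h p' q' by simp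
        have jj: "int j' - int i' = int j - int i" using h(3) p' q' unfolding ct_def by simp
        have qd: "(i', j') \<in> diag lam" using h(2) q' Dsub by auto
        then have "j' \<le> part lam i'" "1 \<le> i'" unfolding diag_def by auto
        have "part lam i' \<le> part lam (i + 1)"
          using part_antitone[OF assms(1), of "i + 1" i'] i by simp
        have pd: "(i, j) \<in> diag lam" using h(1) p' Dsub by auto
        then have "1 \<le> i" "1 \<le> j" unfolding diag_def by auto
        have "(i + 1, j + 1) \<in> diag lam" unfolding diag_def
          using \<open>j' \<le> part lam i'\<close> \<open>part lam i' \<le> part lam (i + 1)\<close> jj i by auto
        then show False using rim h(1) p' by auto
      qed
      show False
      proof (cases "fst p = fst q")
        case True
        then have "snd p = snd q" using pq(3) unfolding ct_def by simp
        then show False using True ne by (simp add: prod_eq_iff)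
      next
        case False
        then have "fst p < fst q \<or> fst q < fst p" by auto
        then show False using key pq by metis
      qed
    qed
  qed
  have Dne: "D \<noteq> {}" using cD assms(3) by auto
  define C where "C = ct ` D"
  have finC: "finite C" and Cne: "C \<noteq> {}" unfolding C_def using finD Dne by auto
  define m where "m = Min C"
  define M where "M = Max C"
  have mC: "m \<in> C" and MC: "M \<in> C" using finC Cne m_def M_def by auto
  have CI: "C = {m..M}"
  proof (intro set_eqI iffI)
    fix z assume "z \<in> C"
    then show "z \<in> {m..M}" using finC m_def M_def by auto
  next
    fix z assume z: "z \<in> {m..M}"
    obtain x where x: "x \<in> D" "ct x = m" using mC C_def by auto
    obtain y where y: "y \<in> D" "ct y = M" using MC C_def by auto
    have "(\<lambda>u v. u \<in> D \<and> v \<in> D \<and> cell_adj u v)\<^sup>*\<^sup>* x y" using conn x y unfolding cells_connected_def by blast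
    from connected_convex[OF this x(1)] have "\<forall>z. min (ct x) (ct y) \<le> z \<and> z \<le> max (ct x) (ct y) \<longrightarrow> z \<in> ct ` D"
      by blast
    then show "z \<in> C" using z x y C_def by auto
  qed
  have "card C = N" unfolding C_def using card_image[OF inj] cD by simp
  then have "nat (M + 1 - m) = N" using CI by simp
  then have "M = m + int N - 1" using CI mC by auto
  then show ?thesis using CI inj C_def D_def by blast
qed

lemma int_tele:
  "(\<Sum>c\<in>{m..m + int n - 1}. (\<phi> c - \<phi> (c - 1) :: 'a::ab_group_add)) = \<phi> (m + int n - 1) - \<phi> (m - 1)"
proof (induction n)
  case 0 then show ?case by simp
next
  case (Suc n)
  have e: "{m..m + int (Suc n) - 1} = insert (m + int n) {m..m + int n - 1}" by auto
  have "m + int n \<notin> {m..m + int n - 1}" by simp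
  then show ?case unfolding e using Suc.IH by (simp add: algebra_simps)
qed

lemma rim_invariant:
  assumes "is_partition lam" "rim_hook_removal N lam mu" "N \<ge> 1" "\<And>s. \<phi> (s + int N) = \<phi> s"
  shows "Rg \<phi> lam (length lam) = (Rg \<phi> mu (length mu) :: 'a::ab_group_add)"
proof -
  define D where "D = diag lam - diag mu"
  have sub: "diag mu \<subseteq> diag lam" using assms(2) unfolding rim_hook_removal_def by simp
  obtain m where m: "ct ` D = {m..m + int N - 1}" "inj_on ct D" using rim_contents[OF assms(1-3)] D_def by blast
  define g where "g = (\<lambda>c. \<phi> c - \<phi> (c - 1))"
  have fg: "(\<lambda>(i, j). \<phi> (int j - int i) - \<phi> (int j - int i - 1)) = (\<lambda>p. g (ct p))"
    unfolding g_def ct_def by auto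
  have "(\<Sum>p\<in>D. g (ct p)) = (\<Sum>c\<in>ct ` D. g c)" using sum.reindex[OF m(2), of g] by simp
  also have "\<dots> = \<phi> (m + int N - 1) - \<phi> (m - 1)" unfolding m(1) g_def by (rule int_tele)
  also have "\<phi> (m + int N - 1) = \<phi> (m - 1)" using assms(4)[of "m - 1"] by (simp add: algebra_simps)
  finally have D0: "(\<Sum>p\<in>D. g (ct p)) = 0" by simp
  have "Rg \<phi> lam (length lam) = (\<Sum>p\<in>diag lam. g (ct p))" unfolding cell_formula fg ..
  also have "\<dots> = (\<Sum>p\<in>D. g (ct p)) + (\<Sum>p\<in>diag mu. g (ct p))"
    unfolding D_def using sum.subset_diff[OF sub finite_diag] by simp
  also have "(\<Sum>p\<in>diag mu. g (ct p)) = Rg \<phi> mu (length mu)" unfolding cell_formula fg ..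
  finally show ?thesis using D0 by simp
qed

lemma chain_invariant:
  assumes "(rim_hook_removal N)\<^sup>*\<^sup>* lam eta" "is_partition lam" "N \<ge> 1" "\<And>s. \<phi> (s + int N) = \<phi> s"
  shows "is_partition eta \<and> (Rg \<phi> eta (length eta) :: 'a::ab_group_add) = Rg \<phi> lam (length lam)"
  using assms(1)
proof (induction rule: rtranclp_induct)
  case base then show ?case using assms(2) by simp
next
  case (step y z)
  have "is_partition z" using step.hyps(2) unfolding rim_hook_removal_def by simp
  moreover have "Rg \<phi> y (length y) = Rg \<phi> z (length z)"
  proof -
    have py: "is_partition y" using step.IH by simp
    show ?thesis by (rule rim_invariant[where \<phi>=\<phi>, OF py step.hyps(2) assms(3) assms(4)])
  qed
  ultimately show ?case using step.IH by simp
qed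

lemma of_real_of_rat_c: "complex_of_real (of_rat q) = of_rat q"
  by (cases q) (simp add: of_rat_rat)

lemma map_poly_of_rat_add: "map_poly (of_rat :: rat \<Rightarrow> 'a::field_char_0) (p + q) = map_poly of_rat p + map_poly of_rat q"
  by (rule poly_eqI) (simp add: coeff_map_poly of_rat_add)

lemma map_poly_of_rat_mult: "map_poly (of_rat :: rat \<Rightarrow> 'a::field_char_0) (p * q) = map_poly of_rat p * map_poly of_rat q"
  by (rule poly_eqI) (simp add: coeff_map_poly coeff_mult of_rat_sum of_rat_mult)

lemma QzI: "x = poly (map_poly of_rat p) (zN N) \<Longrightarrow> x \<in> Qzeta N"
  unfolding Qzeta_def by blast

lemma Qz_of_rat: "of_rat q \<in> Qzeta N"
  by (rule QzI[of _ "[:q:]"]) (simp add: map_poly_pCons)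

lemma Qz_zeta: "zN N \<in> Qzeta N"
proof -
  have "map_poly (of_rat :: rat \<Rightarrow> complex) [:0, 1:] = [:0, 1:]" by (simp add: map_poly_pCons)
  then have "poly (map_poly of_rat [:0, 1:]) (zN N) = zN N" by simp
  then show ?thesis by (intro QzI[of _ "[:0, 1:]"]) simp
qed

lemma Qz_add: "x \<in> Qzeta N \<Longrightarrow> y \<in> Qzeta N \<Longrightarrow> x + y \<in> Qzeta N"
proof -
  assume "x \<in> Qzeta N" "y \<in> Qzeta N"
  then obtain p q where "x = poly (map_poly of_rat p) (zN N)" "y = poly (map_poly of_rat q) (zN N)"
    unfolding Qzeta_def by blast
  then have "x + y = poly (map_poly of_rat (p + q)) (zN N)" by (simp add: map_poly_of_rat_add)
  then show ?thesis unfolding Qzeta_def by blast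
qed

lemma Qz_mult: "x \<in> Qzeta N \<Longrightarrow> y \<in> Qzeta N \<Longrightarrow> x * y \<in> Qzeta N"
proof -
  assume "x \<in> Qzeta N" "y \<in> Qzeta N"
  then obtain p q where "x = poly (map_poly of_rat p) (zN N)" "y = poly (map_poly of_rat q) (zN N)"
    unfolding Qzeta_def by blast
  then have "x * y = poly (map_poly of_rat (p * q)) (zN N)" by (simp add: map_poly_of_rat_mult)
  then show ?thesis unfolding Qzeta_def by blast
qed

lemma Qz_0: "0 \<in> Qzeta N" using Qz_of_rat[of 0 N] by simp
lemma Qz_1: "1 \<in> Qzeta N" using Qz_of_rat[of 1 N] by simp

lemma Qz_uminus: "x \<in> Qzeta N \<Longrightarrow> - x \<in> Qzeta N"
proof -
  assume h: "x \<in> Qzeta N"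
  have "- x = of_rat (-1) * x" by simp
  then show ?thesis using Qz_mult[OF Qz_of_rat h] by metis
qed

lemma Qz_diff: "x \<in> Qzeta N \<Longrightarrow> y \<in> Qzeta N \<Longrightarrow> x - y \<in> Qzeta N"
proof -
  assume h: "x \<in> Qzeta N" "y \<in> Qzeta N"
  have "x - y = x + (- y)" by simp
  then show ?thesis using Qz_add[OF h(1) Qz_uminus[OF h(2)]] by metis
qed

lemma Qz_sum: "(\<And>i. i \<in> I \<Longrightarrow> f i \<in> Qzeta N) \<Longrightarrow> sum f I \<in> Qzeta N"
proof (induction I rule: infinite_finite_induct)
  case (infinite A) then show ?case using Qz_0 by simp
next
  case empty then show ?case using Qz_0 by simp
next
  case (insert x F) then show ?case using Qz_add by simp
qed

lemma Qz_power: "x \<in> Qzeta N \<Longrightarrow> x ^ n \<in> Qzeta N"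
  by (induction n) (auto intro: Qz_mult simp: Qz_1)

lemma Qz_real: "(x::real) \<in> \<rat> \<Longrightarrow> complex_of_real x \<in> Qzeta N"
proof -
  assume "x \<in> \<rat>"
  then obtain q where "x = of_rat q" by (auto elim: Rats_cases)
  then show ?thesis by (simp add: of_real_of_rat_c Qz_of_rat)
qed

lemma Qz_of_nat: "of_nat n \<in> Qzeta N" using Qz_of_rat[of "of_nat n" N] by simp
lemma Qz_of_int: "of_int n \<in> Qzeta N" using Qz_of_rat[of "of_int n" N] by simp

lemma zN_nonzero: "zN N \<noteq> 0" by (simp add: zN_def)

lemma zN_powi: "zN N powi k = cis (2 * pi * of_int k / real N)"
  unfolding zN_def by (simp add: cis_power_int algebra_simps)

lemma zN_powi_eq_1:
  assumes "N > 0"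
  shows "zN N powi k = 1 \<longleftrightarrow> int N dvd k"
proof
  assume h: "zN N powi k = 1"
  then have "cos (2 * pi * of_int k / real N) = 1" unfolding zN_powi by (metis cis.sel(1) one_complex.sel(1))
  then obtain n :: int where "2 * pi * of_int k / real N = of_int n * 2 * pi" by (auto simp: cos_one_2pi_int)
  then have "real_of_int k = real_of_int (n * int N)" using assms by (simp add: field_simps)
  then have "k = n * int N" by linarith
  then show "int N dvd k" by simp
next
  assume "int N dvd k"
  then obtain n where "k = int N * n" by blast
  then have "2 * pi * of_int k / real N = 2 * pi * of_int n" using assms by simp
  then show "zN N powi k = 1" unfolding zN_powi by (simp add: cis_multiple_2pi)
qed

lemma zN_pow_N: "N > 0 \<Longrightarrow> zN N ^ N = 1"
  using zN_powi_eq_1[of N "int N"] by simp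

lemma zN_powi_mod: "N > 0 \<Longrightarrow> zN N powi k = zN N ^ nat (k mod int N)"
proof -
  assume N: "N > 0"
  have "k = k mod int N + int N * (k div int N)" by simp
  then have "zN N powi k = zN N powi (k mod int N + int N * (k div int N))" by simp
  also have "\<dots> = zN N powi (k mod int N) * (zN N powi int N) powi (k div int N)"
    by (simp only: power_int_add[OF disjI1[OF zN_nonzero]] power_int_mult)
  also have "zN N powi int N = 1" using zN_pow_N[OF N] by simp
  also have "zN N powi (k mod int N) = zN N ^ nat (k mod int N)"
  proof -
    have "k mod int N = int (nat (k mod int N))" using N by simp
    then show ?thesis by (metis power_int_of_nat)
  qed
  finally show ?thesis by simp
qed

lemma Qz_powi: "N > 0 \<Longrightarrow> zN N powi k \<in> Qzeta N"
  using zN_powi_mod[of N k] Qz_power[OF Qz_zeta, of N "nat (k mod int N)"] by simp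

lemma sum_closed_P:
  assumes "\<And>x y. P x \<Longrightarrow> P y \<Longrightarrow> P (x + y)" "P 0"
  shows "(\<And>i. i \<in> A \<Longrightarrow> P (g i)) \<Longrightarrow> P (sum g A)"
proof (induction A rule: infinite_finite_induct)
  case (infinite A) then show ?case using assms by simp
next
  case empty then show ?case using assms by simp
next
  case (insert x F) then show ?case using assms by simp
qed

lemma fps_inverse_closed:
  fixes f :: "'a::field fps"
  assumes add: "\<And>x y. P x \<Longrightarrow> P y \<Longrightarrow> P (x + y)"
    and mult: "\<And>x y. P x \<Longrightarrow> P y \<Longrightarrow> P (x * y)"
    and neg: "\<And>x. P x \<Longrightarrow> P (- x)" and zero: "P 0"
    and coef: "\<And>n. P (f $ n)" and inv0: "P (inverse (f $ 0))"
  shows "P (inverse f $ n)"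
proof -
  have "P (natfun_inverse f n)"
  proof (induction n rule: less_induct)
    case (less n)
    show ?case
    proof (cases n)
      case 0 then show ?thesis using inv0 by simp
    next
      case (Suc k)
      have "P (sum (\<lambda>i. f $ i * natfun_inverse f (n - i)) {1..n})"
        by (rule sum_closed_P[OF add zero]) (auto intro!: mult coef less.IH)
      then show ?thesis using Suc mult neg inv0 by simp
    qed
  qed
  then show ?thesis by (simp add: fps_inverse_def)
qed

lemma fact_rat: "(fact m :: real) \<in> \<rat>"
  by (metis Rats_of_nat of_nat_fact)

lemma of_rat_fact_c: "(of_rat (fact n) :: 'a::field_char_0) = fact n"
  by (metis of_nat_fact of_rat_of_nat_eq)

lemma bernoulli_rat: "bernoulli_num n \<in> \<rat>"
proof -
  have "inverse (fps_shift 1 (fps_exp (1::real) - 1)) $ n \<in> \<rat>"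
  proof (rule fps_inverse_closed[where P = "\<lambda>x. x \<in> \<rat>"])
    fix m show "fps_shift 1 (fps_exp (1::real) - 1) $ m \<in> \<rat>" by (simp add: fact_rat)
  next
    show "inverse (fps_shift 1 (fps_exp (1::real) - 1) $ 0) \<in> \<rat>" by simp
  qed auto
  then show ?thesis unfolding bernoulli_num_def using fact_rat Rats_mult by simp
qed

lemma zeta_neg_rat: "zeta_neg k \<in> \<rat>"
  unfolding zeta_neg_def using bernoulli_rat by simp

lemma tele_S:
  fixes v :: complex
  shows "(v - 1) * (\<Sum>m<n. of_nat m * v ^ m) = of_nat n * v ^ n - (\<Sum>m<n. v ^ (m + 1))"
  by (induction n) (simp_all add: algebra_simps)

lemma inv_one_minus_root:
  fixes v :: complex
  assumes "v ^ N = 1" "v \<noteq> 1" "N > 0"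
  shows "inverse (1 - v) = - (\<Sum>m<N. of_nat m * v ^ m) / of_nat N"
proof -
  have g: "(v - 1) * (\<Sum>m<N. v ^ m) = v ^ N - 1"
    by (induction N) (simp_all add: algebra_simps)
  then have "(\<Sum>m<N. v ^ m) = 0" using assms by simp
  then have "(\<Sum>m<N. v ^ (m + 1)) = 0" by (simp add: sum_distrib_left[symmetric] mult.commute)
  then have "(v - 1) * (\<Sum>m<N. of_nat m * v ^ m) = of_nat N" using tele_S[of v N] assms by simp
  then show ?thesis using assms by (simp add: field_simps)
qed

lemma ckr_Qz:
  assumes "N > 0" "r < N"
  shows "ckr N r k \<in> Qzeta N"
proof (cases "r = 0")
  case True
  have "(1 - 1 / 2 ^ k) * zeta_neg k \<in> \<rat>" using zeta_neg_rat by simp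
  moreover have "ckr N r k = complex_of_real ((1 - 1 / 2 ^ k) * zeta_neg k)"
    unfolding ckr_def by (rule if_P[OF True])
  ultimately show ?thesis using Qz_real by metis
next
  case False
  define w where "w = zN N powi (- int r)"
  have wQ: "w \<in> Qzeta N" unfolding w_def using Qz_powi[OF assms(1)] .
  have wN: "w ^ N = 1"
  proof -
    have "w ^ N = w powi int N" by simp
    also have "\<dots> = zN N powi (- int r * int N)" unfolding w_def by (simp only: power_int_mult)
    also have "\<dots> = 1" using zN_powi_eq_1[OF assms(1)] by simp
    finally show ?thesis .
  qed
  have w1: "w \<noteq> 1"
  proof
    assume "w = 1"
    then have "int N dvd - int r" using zN_powi_eq_1[OF assms(1)] w_def by simp
    then have "N dvd r" by simp
    then show False using False assms(2) by (auto dest: dvd_imp_le)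
  qed
  have invQ: "inverse (1 - w) \<in> Qzeta N"
  proof -
    have "- (\<Sum>m<N. of_nat m * w ^ m) / of_nat N = of_rat (- 1 / of_nat N) * (\<Sum>m<N. of_nat m * w ^ m)"
      by (simp add: of_rat_divide of_rat_minus field_simps)
    moreover have "(\<Sum>m<N. of_nat m * w ^ m) \<in> Qzeta N"
      by (rule Qz_sum) (auto intro!: Qz_mult Qz_of_nat Qz_power wQ)
    ultimately show ?thesis using inv_one_minus_root[OF wN w1 assms(1)] Qz_mult[OF Qz_of_rat] by simp
  qed
  define f where "f = fps_exp (1/2) - fps_const w * fps_exp (-1/2 :: complex)"
  have "inverse f $ k \<in> Qzeta N"
  proof (rule fps_inverse_closed[where P = "\<lambda>x. x \<in> Qzeta N"])
    fix n
    have "f $ n = of_rat ((1/2) ^ n / fact n) - w * of_rat ((-1/2) ^ n / fact n)"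
      unfolding f_def by (simp add: of_rat_divide of_rat_power of_rat_minus of_rat_fact_c)
    then show "f $ n \<in> Qzeta N" using Qz_diff[OF Qz_of_rat Qz_mult[OF wQ Qz_of_rat]] by simp
  next
    have "f $ 0 = 1 - w" unfolding f_def by simp
    then show "inverse (f $ 0) \<in> Qzeta N" using invQ by simp
  qed (auto intro: Qz_add Qz_mult Qz_uminus Qz_0)
  moreover have "fact k \<in> Qzeta N" using Qz_of_nat[of "fact k" N] by (simp add: of_nat_fact)
  ultimately have "fact k * inverse f $ k \<in> Qzeta N" using Qz_mult by blast
  then show ?thesis using False unfolding ckr_def f_def w_def by simp
qed

lemma Lam_const: "c \<in> Qzeta N \<Longrightarrow> (\<lambda>_. c) \<in> LambdaN N"
  by (rule LambdaN.const)

lemma Lam_sum: "finite I \<Longrightarrow> (\<And>i. i \<in> I \<Longrightarrow> f i \<in> LambdaN N) \<Longrightarrow> (\<lambda>x. \<Sum>i\<in>I. f i x) \<in> LambdaN N"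
proof (induction I rule: finite_induct)
  case empty then show ?case using LambdaN.const[OF Qz_0] by simp
next
  case (insert y F)
  then have "(\<lambda>x. f y x + (\<Sum>i\<in>F. f i x)) \<in> LambdaN N" by (intro LambdaN.add) auto
  then show ?case using insert by simp
qed

lemma Lam_scal: "c \<in> Qzeta N \<Longrightarrow> f \<in> LambdaN N \<Longrightarrow> (\<lambda>x. c * f x) \<in> LambdaN N"
  using LambdaN.mult[OF LambdaN.const] by blast

definition Fc :: "nat \<Rightarrow> int \<Rightarrow> complex" where
  "Fc k u = (of_int u + 1/2) ^ k"

definition Phi :: "nat \<Rightarrow> nat \<Rightarrow> nat \<Rightarrow> int \<Rightarrow> complex" where
  "Phi N r m s = zN N powi (int r * (s + 1)) * (of_int s + 1/2) ^ m"

lemma pk_Rg: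
  "complex_of_real (pk k \<rho>) = complex_of_real ((1 - 1 / 2 ^ k) * zeta_neg k) + Rg (Fc k) \<rho> (length \<rho>)"
  unfolding pk_def Rg_def Ssum_def Fc_def
  by (simp add: sum_subtractf)

lemma pkr_Rg:
  "pkr N r m lam = ckr N r m + Rg (Phi N r m) lam (length lam)"
  unfolding pkr_def Rg_def Ssum_def Phi_def
  by (simp add: sum_subtractf algebra_simps)

lemma Ssum_one: "Ssum (\<lambda>_. 1 :: complex) l n = of_nat n"
  unfolding Ssum_def by simp

lemma L_main:
  assumes "t > 0" "is_partition lam" "is_partition \<rho>"
    "quot_set t a lam = (\<lambda>x. x + c) ` beta_set \<rho>"
    "c - X \<ge> int (length \<rho>)" "M' = - (int t * X + int a)" "M' \<ge> int (length lam)"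
  shows "Ssum F \<rho> (nat (c - X)) =
    Ssum (\<lambda>s. if s mod int t = int a then F ((s - int a) div int t - c) else 0) lam (nat M')"
proof -
  have l: "length \<rho> \<le> nat (c - X)" using assms(5) by simp
  have e: "- int (nat (c - X)) = X - c" using assms(5) by simp
  have "Ssum F \<rho> (nat (c - X)) = (\<Sum>u\<in>beta_set \<rho> \<inter> {X - c..}. F u)"
    using beta_sum[OF assms(3) l, of F] e by simp
  also have "\<dots> = (\<Sum>v\<in>(\<lambda>x. x + c) ` (beta_set \<rho> \<inter> {X - c..}). F (v - c))"
    by (subst sum.reindex) (auto simp: inj_on_def)
  also have "(\<lambda>x. x + c) ` (beta_set \<rho> \<inter> {X - c..}) = quot_set t a lam \<inter> {X..}"
    using assms(4) shift_inter by simp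
  also have "(\<Sum>v\<in>quot_set t a lam \<inter> {X..}. F (v - c)) =
    Ssum (\<lambda>s. if s mod int t = int a then F ((s - int a) div int t - c) else 0) lam (nat M')"
    using quot_sum(1)[OF assms(1,2,6,7), of "\<lambda>v. F (v - c)"] by simp
  finally show ?thesis .
qed

lemma geom_zero:
  fixes w :: complex
  assumes "w ^ n = 1" "w \<noteq> 1"
  shows "(\<Sum>j<n. w ^ j) = 0"
proof -
  have "(w - 1) * (\<Sum>j<n. w ^ j) = w ^ n - 1"
    by (induction n) (simp_all add: algebra_simps)
  then show ?thesis using assms by simp
qed

lemma roots_filter:
  assumes N: "N = t * q" "t > 0" "q > 0" "a < t"
  shows "(\<Sum>j<t. (zN N powi (int q * (s - int a))) ^ j) = (if s mod int t = int a then of_nat t else 0)"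
proof -
  define w where "w = zN N powi (int q * (s - int a))"
  have Npos: "N > 0" using N by simp
  have dv: "int N dvd int q * (s - int a) \<longleftrightarrow> int t dvd (s - int a)"
  proof -
    have "int N = int t * int q" using N by simp
    then have "int N dvd int q * (s - int a) \<longleftrightarrow> int t * int q dvd (s - int a) * int q" by (simp add: mult.commute)
    also have "\<dots> \<longleftrightarrow> int t dvd (s - int a)" using N(3) by simp
    finally show ?thesis .
  qed
  have md: "s mod int t = int a \<longleftrightarrow> int t dvd (s - int a)"
  proof
    assume "s mod int t = int a"
    then have "s = int t * ((s - int a) div int t) + int a" using mod_eq_decomp[of "int t" s "int a"] N(2) by simp
    then have "s - int a = int t * ((s - int a) div int t)" by simp
    then show "int t dvd (s - int a)" unfolding dvd_def by blast
  next
    assume "int t dvd (s - int a)"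
    then obtain z where "s - int a = int t * z" by blast
    then have "s = int a + int t * z" by simp
    then show "s mod int t = int a" using N by simp
  qed
  show ?thesis
  proof (cases "s mod int t = int a")
    case True
    then have "w = 1" unfolding w_def using zN_powi_eq_1[OF Npos] dv md by simp
    then show ?thesis using True w_def by simp
  next
    case False
    then have w1: "w \<noteq> 1" unfolding w_def using zN_powi_eq_1[OF Npos] dv md by simp
    have "w ^ t = zN N powi (int q * (s - int a) * int t)" unfolding w_def
      by (simp only: power_int_mult power_int_of_nat)
    also have "\<dots> = 1" using zN_powi_eq_1[OF Npos] N by simp
    finally have "w ^ t = 1" .
    then show ?thesis using geom_zero[OF _ w1] False w_def by simp
  qed
qed

lemma powi_combine:
  "zN N powi (- int (j * q) * (int a + 1)) * zN N powi (int (j * q) * (s + 1)) = (zN N powi (int q * (s - int a))) ^ j"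
proof -
  have "zN N powi (- int (j * q) * (int a + 1)) * zN N powi (int (j * q) * (s + 1))
     = zN N powi (- int (j * q) * (int a + 1) + int (j * q) * (s + 1))"
    by (simp only: power_int_add[OF disjI1[OF zN_nonzero]])
  also have "- int (j * q) * (int a + 1) + int (j * q) * (s + 1) = int q * (s - int a) * int j"
    by (simp add: algebra_simps)
  also have "zN N powi (int q * (s - int a) * int j) = (zN N powi (int q * (s - int a))) ^ j"
    by (simp only: power_int_mult power_int_of_nat)
  finally show ?thesis .
qed

definition dq :: "nat \<Rightarrow> nat \<Rightarrow> int \<Rightarrow> rat" where
  "dq t a c = - of_nat a / of_nat t - 1 / (2 * of_nat t) - of_int c + 1/2"

definition eqc :: "nat \<Rightarrow> nat \<Rightarrow> int \<Rightarrow> nat \<Rightarrow> nat \<Rightarrow> rat" where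
  "eqc t a c k m = (1 / of_nat t) * of_nat (k choose m) * (1 / of_nat t) ^ m * dq t a c ^ (k - m)"

lemma binom_part:
  assumes "t > 0"
  shows "(\<Sum>m\<le>k. of_rat (eqc t a c k m) * ((of_int s + 1/2) :: complex) ^ m)
    = (1 / of_nat t) * ((of_int s + 1/2) / of_nat t + of_rat (dq t a c)) ^ k"
proof -
  have "((of_int s + 1/2) / of_nat t + of_rat (dq t a c) :: complex) ^ k =
     (\<Sum>m\<le>k. of_nat (k choose m) * ((of_int s + 1/2) / of_nat t) ^ m * of_rat (dq t a c) ^ (k - m))"
    by (rule binomial_ring)
  then show ?thesis
    unfolding eqc_def
    by (simp add: sum_distrib_left of_rat_mult of_rat_divide of_rat_power power_divide algebra_simps)
qed

lemma lin_part:
  assumes "t > 0" "s mod int t = int a"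
  shows "((of_int s + 1/2) / of_nat t + of_rat (dq t a c) :: complex) = of_int ((s - int a) div int t - c) + 1/2"
proof -
  define Q where "Q = (s - int a) div int t"
  have s: "s = int t * Q + int a" unfolding Q_def using mod_eq_decomp[OF _ assms(2)] assms(1) by simp
  have dqe: "(of_rat (dq t a c) :: complex) = - of_nat a / of_nat t - 1 / (2 * of_nat t) - of_int c + 1/2"
    unfolding dq_def by (simp add: of_rat_add of_rat_diff of_rat_divide of_rat_minus of_rat_mult)
  show ?thesis unfolding Q_def[symmetric] dqe using assms(1) s by (simp add: field_simps)
qed

lemma pointwise:
  assumes N: "N = t * q" "t > 0" "q > 0" "a < t"
  shows "(if s mod int t = int a then (of_int ((s - int a) div int t - c) + 1/2 :: complex) ^ k else 0)
    = (\<Sum>j<t. \<Sum>m\<le>k. (of_rat (eqc t a c k m) * zN N powi (- int (j * q) * (int a + 1)))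
          * (zN N powi (int (j * q) * (s + 1)) * (of_int s + 1/2) ^ m))"
proof -
  define w where "w = zN N powi (int q * (s - int a))"
  have "(\<Sum>j<t. \<Sum>m\<le>k. (of_rat (eqc t a c k m) * zN N powi (- int (j * q) * (int a + 1)))
          * (zN N powi (int (j * q) * (s + 1)) * (of_int s + 1/2) ^ m))
      = (\<Sum>j<t. \<Sum>m\<le>k. w ^ j * (of_rat (eqc t a c k m) * (of_int s + 1/2) ^ m))"
  proof (intro sum.cong refl)
    fix j m
    have "zN N powi (- int (j * q) * (int a + 1)) * zN N powi (int (j * q) * (s + 1)) = w ^ j"
      unfolding w_def by (rule powi_combine)
    then show "(of_rat (eqc t a c k m) * zN N powi (- int (j * q) * (int a + 1)))
          * (zN N powi (int (j * q) * (s + 1)) * (of_int s + 1/2) ^ m) = w ^ j * (of_rat (eqc t a c k m) * (of_int s + 1/2) ^ m)"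
      by (metis (no_types, lifting) mult.assoc mult.commute mult.left_commute)
  qed
  also have "\<dots> = (\<Sum>j<t. w ^ j) * (\<Sum>m\<le>k. of_rat (eqc t a c k m) * (of_int s + 1/2) ^ m)"
    by (rule sum_product[symmetric])
  also have "\<dots> = (if s mod int t = int a then of_nat t else 0) * ((1 / of_nat t) * ((of_int s + 1/2) / of_nat t + of_rat (dq t a c)) ^ k)"
    unfolding w_def roots_filter[OF N] binom_part[OF N(2)] ..
  also have "\<dots> = (if s mod int t = int a then (of_int ((s - int a) div int t - c) + 1/2 :: complex) ^ k else 0)"
    using lin_part[OF N(2)] N(2) by auto
  finally show ?thesis by simp
qed

lemma pkr_Qz:
  assumes "N > 0" "r < N"
  shows "pkr N r m l \<in> Qzeta N"
proof -
  have "(\<Sum>i = 1..length l.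
          zN N powi (int r * (int (part l i) - int i + 1)) * (complex_of_real (real (part l i) - real i + 1/2)) ^ m
        - zN N powi (int r * (1 - int i)) * (complex_of_real (- real i + 1/2)) ^ m) \<in> Qzeta N"
  proof (rule Qz_sum)
    fix i
    have r1: "real (part l i) - real i + 1/2 \<in> \<rat>" by simp
    have r2: "- real i + 1/2 \<in> \<rat>" by simp
    show "zN N powi (int r * (int (part l i) - int i + 1)) * (complex_of_real (real (part l i) - real i + 1/2)) ^ m
        - zN N powi (int r * (1 - int i)) * (complex_of_real (- real i + 1/2)) ^ m \<in> Qzeta N"
      by (intro Qz_diff Qz_mult Qz_powi[OF assms(1)] Qz_power Qz_real r1 r2)
  qed
  then show ?thesis unfolding pkr_def using Qz_add[OF ckr_Qz[OF assms]] by blast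
qed

lemma pk_rat: "pk k \<rho> \<in> \<rat>"
  unfolding pk_def using zeta_neg_rat by (intro Rats_add Rats_mult Rats_sum) auto

lemma Phi0_periodic:
  assumes "N > 0"
  shows "Phi N r 0 (s + int N) = Phi N r 0 s"
proof -
  have "zN N powi (int r * (s + int N + 1)) = zN N powi (int r * (s + 1) + int N * int r)"
    by (simp add: algebra_simps)
  also have "\<dots> = zN N powi (int r * (s + 1)) * (zN N powi int N) powi int r"
    by (simp only: power_int_add[OF disjI1[OF zN_nonzero]] power_int_mult)
  also have "zN N powi int N = 1" using zN_pow_N[OF assms] by simp
  finally show ?thesis unfolding Phi_def by simp
qed

lemma ind_periodic:
  assumes "N = t * q"
  shows "(if (s + int N) mod int t = int a then 1 else 0 :: complex) = (if s mod int t = int a then 1 else 0)"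
proof -
  have "(s + int N) mod int t = s mod int t" using assms by simp
  then show ?thesis by simp
qed


theorem mainTheorem10:
  fixes N t a k :: nat and eta :: "nat list"
  assumes "N \<ge> 2"
    and "is_partition eta" and "is_core N eta"
    and "t dvd N" and "a < t" and "k \<ge> 1"
  shows "\<exists>G \<in> LambdaN N. \<forall>lam. is_partition lam \<and> core_of N lam eta \<longrightarrow>
           G lam = complex_of_real (pk k (t_quotient t a lam))"
proof -
  have Npos: "N > 0" and N1: "N \<ge> 1" using assms(1) by auto
  have t0: "t > 0" using assms(4) Npos by (cases t) auto
  obtain q where Nq: "N = t * q" using assms(4) by (auto elim: dvdE)
  have q0: "q > 0" using Nq Npos by (cases q) auto
  obtain \<rho>e c where re: "is_partition \<rho>e" "quot_set t a eta = (\<lambda>x. x + c) ` beta_set \<rho>e"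
    using quot_exists[OF t0 assms(5) assms(2)] by blast
  have tqe: "t_quotient t a eta = \<rho>e" by (rule tq_eq[OF re])
  define e where "e = (\<lambda>j m. of_rat (eqc t a c k m) * zN N powi (- int (j * q) * (int a + 1)))"
  have eQ: "e j m \<in> Qzeta N" for j m unfolding e_def by (intro Qz_mult Qz_of_rat Qz_powi[OF Npos])
  have rN: "j * q < N" if "j < t" for j using that Nq q0 by simp
  define H where "H = (\<lambda>l. \<Sum>j<t. \<Sum>m\<in>{1..k}. e j m * pkr N (j * q) m l)"
  define C0 where "C0 = complex_of_real (pk k \<rho>e) - H eta"
  define G where "G = (\<lambda>l. H l + C0)"
  have HL: "H \<in> LambdaN N"
  proof -
    have inner: "(\<lambda>l. \<Sum>m\<in>{1..k}. e j m * pkr N (j * q) m l) \<in> LambdaN N" if j: "j < t" for j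
    proof (rule Lam_sum)
      show "finite {1..k}" by simp
    next
      fix m assume m: "m \<in> {1..k}"
      show "(\<lambda>l. e j m * pkr N (j * q) m l) \<in> LambdaN N"
        using Lam_scal[OF eQ LambdaN.gen[of m "j * q" N]] m rN[OF j] by simp
    qed
    have "(\<lambda>l. \<Sum>j\<in>{..<t}. (\<lambda>l. \<Sum>m\<in>{1..k}. e j m * pkr N (j * q) m l) l) \<in> LambdaN N"
    proof (rule Lam_sum)
      show "finite {..<t}" by simp
    next
      fix j assume "j \<in> {..<t}"
      then have "j < t" by simp
      then show "(\<lambda>l. \<Sum>m\<in>{1..k}. e j m * pkr N (j * q) m l) \<in> LambdaN N" by (rule inner)
    qed
    then show ?thesis unfolding H_def by simp
  qed
  have C0Q: "C0 \<in> Qzeta N"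
  proof -
    have "H eta \<in> Qzeta N" unfolding H_def
    proof (rule Qz_sum)
      fix j assume "j \<in> {..<t}"
      then have j: "j < t" by simp
      show "(\<Sum>m\<in>{1..k}. e j m * pkr N (j * q) m eta) \<in> Qzeta N"
        by (rule Qz_sum) (rule Qz_mult[OF eQ pkr_Qz[OF Npos rN[OF j]]])
    qed
    then show ?thesis unfolding C0_def by (rule Qz_diff[OF Qz_real[OF pk_rat]])
  qed
  have GL: "G \<in> LambdaN N" unfolding G_def
    by (rule LambdaN.add[OF HL LambdaN.const[OF C0Q]])
  define ind where "ind = (\<lambda>s::int. if s mod int t = int a then 1 else (0::complex))"
  define G' where "G' = (\<lambda>s. if s mod int t = int a then Fc k ((s - int a) div int t - c) else 0)"
  have G'eq: "G' = (\<lambda>s. \<Sum>j<t. \<Sum>m\<le>k. e j m * Phi N (j * q) m s)"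
  proof
    fix s
    show "G' s = (\<Sum>j<t. \<Sum>m\<le>k. e j m * Phi N (j * q) m s)"
      unfolding G'_def Fc_def e_def Phi_def using pointwise[OF Nq t0 q0 assms(5), of s c k] by simp
  qed
  have RG': "Rg G' l (length l) = (\<Sum>j<t. \<Sum>m\<le>k. e j m * Rg (Phi N (j * q) m) l (length l))" for l
    unfolding G'eq by (simp add: Rg_sum Rg_cmult)
  have "\<forall>lam. is_partition lam \<and> core_of N lam eta \<longrightarrow> G lam = complex_of_real (pk k (t_quotient t a lam))"
  proof (intro allI impI)
    fix lam assume h: "is_partition lam \<and> core_of N lam eta"
    then have pl: "is_partition lam" and ch: "(rim_hook_removal N)\<^sup>*\<^sup>* lam eta"
      unfolding core_of_def by auto
    obtain \<rho> cl where rl: "is_partition \<rho>" "quot_set t a lam = (\<lambda>x. x + cl) ` beta_set \<rho>"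
      using quot_exists[OF t0 assms(5) pl] by blast
    have tql: "t_quotient t a lam = \<rho>" by (rule tq_eq[OF rl])
    define S where "S = \<bar>cl\<bar> + \<bar>c\<bar> + int (length \<rho>) + int (length \<rho>e) + int (length lam) + int (length eta) + 1"
    define X where "X = - S"
    define M' where "M' = - (int t * X + int a)"
    have X1: "cl - X \<ge> int (length \<rho>)" "c - X \<ge> int (length \<rho>e)" unfolding X_def S_def by auto
    have M'1: "M' \<ge> int (length lam)" "M' \<ge> int (length eta)"
    proof -
      have "M' = int t * S - int a" unfolding M'_def X_def by simp
      moreover have "int t * S - int a \<ge> int t * S - int t + 1" using assms(5) by simp
      moreover have "int t * S - int t + 1 = int t * (S - 1) + 1" by (simp add: algebra_simps)
      moreover have "int t * (S - 1) \<ge> S - 1"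
      proof -
        have "S - 1 \<ge> 0" unfolding S_def by simp
        then have "1 * (S - 1) \<le> int t * (S - 1)" using t0 by (intro mult_right_mono) simp_all
        then show ?thesis by simp
      qed
      ultimately have "M' \<ge> S" by linarith
      then show "M' \<ge> int (length lam)" "M' \<ge> int (length eta)" unfolding S_def by auto
    qed
    have pe_ch: "is_partition eta \<and> Rg \<phi> eta (length eta) = Rg \<phi> lam (length lam)"
      if per: "\<And>s. \<phi> (s + int N) = \<phi> s" for \<phi> :: "int \<Rightarrow> complex"
      by (rule chain_invariant[where \<phi>=\<phi>, OF ch pl N1 per])
    have ch1: "Ssum (\<lambda>_. 1 :: complex) \<rho> (nat (cl - X)) = Ssum ind lam (nat M')"
      using L_main[OF t0 pl rl(1) rl(2) X1(1) M'_def M'1(1), of "\<lambda>_. 1"] unfolding ind_def by simp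
    have ch2: "Ssum (\<lambda>_. 1 :: complex) \<rho>e (nat (c - X)) = Ssum ind eta (nat M')"
      using L_main[OF t0 assms(2) re(1) re(2) X1(2) M'_def M'1(2), of "\<lambda>_. 1"] unfolding ind_def by simp
    have "Rg ind eta (length eta) = Rg ind lam (length lam)"
      using pe_ch[of ind] ind_periodic[OF Nq] unfolding ind_def by blast
    then have "Rg ind eta (nat M') = Rg ind lam (nat M')"
      using Rg_stable[of eta "nat M'" ind] Rg_stable[of lam "nat M'" ind] M'1 by simp
    then have "Ssum ind eta (nat M') = Ssum ind lam (nat M')" unfolding Rg_def by simp
    then have "(of_nat (nat (cl - X)) :: complex) = of_nat (nat (c - X))"
      using ch1 ch2 Ssum_one by simp
    then have "nat (cl - X) = nat (c - X)" using of_nat_eq_iff by blast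
    then have clc: "cl = c" using X1 by simp
    define n where "n = nat (c - X)"
    have m1: "Ssum (Fc k) \<rho> n = Ssum G' lam (nat M')"
      using L_main[OF t0 pl rl(1) rl(2) X1(1) M'_def M'1(1), of "Fc k"] unfolding G'_def n_def clc by simp
    have m2: "Ssum (Fc k) \<rho>e n = Ssum G' eta (nat M')"
      using L_main[OF t0 assms(2) re(1) re(2) X1(2) M'_def M'1(2), of "Fc k"] unfolding G'_def n_def by simp
    have pkl: "complex_of_real (pk k \<rho>) = complex_of_real ((1 - 1 / 2 ^ k) * zeta_neg k) + Rg (Fc k) \<rho> n"
      using pk_Rg[of k \<rho>] Rg_stable[of \<rho> n "Fc k"] X1(1) clc n_def by simp
    have pke: "complex_of_real (pk k \<rho>e) = complex_of_real ((1 - 1 / 2 ^ k) * zeta_neg k) + Rg (Fc k) \<rho>e n"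
      using pk_Rg[of k \<rho>e] Rg_stable[of \<rho>e n "Fc k"] X1(2) n_def by simp
    have diff1: "complex_of_real (pk k \<rho>) - complex_of_real (pk k \<rho>e) = Rg G' lam (nat M') - Rg G' eta (nat M')"
      using pkl pke m1 m2 unfolding Rg_def by simp
    also have "\<dots> = Rg G' lam (length lam) - Rg G' eta (length eta)"
      using Rg_stable[of lam "nat M'" G'] Rg_stable[of eta "nat M'" G'] M'1 by simp
    also have "\<dots> = (\<Sum>j<t. \<Sum>m\<le>k. e j m * (Rg (Phi N (j * q) m) lam (length lam) - Rg (Phi N (j * q) m) eta (length eta)))"
      unfolding RG' by (simp add: sum_subtractf right_diff_distrib)
    also have "\<dots> = (\<Sum>j<t. \<Sum>m\<in>{1..k}. e j m * (pkr N (j * q) m lam - pkr N (j * q) m eta))"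
    proof (rule sum.cong[OF refl])
      fix j assume "j \<in> {..<t}"
      have ins: "{..k} = insert 0 {1..k}" by auto
      have z: "Rg (Phi N (j * q) 0) lam (length lam) - Rg (Phi N (j * q) 0) eta (length eta) = 0"
        using pe_ch[of "Phi N (j * q) 0"] Phi0_periodic[OF Npos] by simp
      have "(\<Sum>m\<le>k. e j m * (Rg (Phi N (j * q) m) lam (length lam) - Rg (Phi N (j * q) m) eta (length eta)))
         = (\<Sum>m\<in>{1..k}. e j m * (Rg (Phi N (j * q) m) lam (length lam) - Rg (Phi N (j * q) m) eta (length eta)))"
        unfolding ins using z by (simp add: sum.insert)
      also have "\<dots> = (\<Sum>m\<in>{1..k}. e j m * (pkr N (j * q) m lam - pkr N (j * q) m eta))"
        by (intro sum.cong refl) (simp add: pkr_Rg)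
      finally show "(\<Sum>m\<le>k. e j m * (Rg (Phi N (j * q) m) lam (length lam) - Rg (Phi N (j * q) m) eta (length eta)))
         = (\<Sum>m\<in>{1..k}. e j m * (pkr N (j * q) m lam - pkr N (j * q) m eta))" .
    qed
    also have "\<dots> = H lam - H eta"
      unfolding H_def by (simp add: sum_subtractf right_diff_distrib)
    finally have "complex_of_real (pk k \<rho>) = H lam - H eta + complex_of_real (pk k \<rho>e)"
      by (simp add: algebra_simps)
    then show "G lam = complex_of_real (pk k (t_quotient t a lam))"
      unfolding G_def C0_def tql by simp
  qed
  then show ?thesis using GL by blast
qed

end
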